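(* Consider the scheme with the classical entropy $f(\rho)=\rho(\ln\rho-1)$. Let $\rho^{n-1},\rho^n,\phi^n\in\mathcal C$ with $\min_{i,j,k}\rho^n_{i,j,k}>0$. Then there exists a unique pair $(\rho^{n+1},\phi^{n+1})\in\mathcal C\times\mathcal C$ with $\rho^{n+1}_{i,j,k}>0$ for all $i,j,k=1,\dots,N$ solving the scheme.
   Context: Grid setting: $\Omega=(a,b)^3$, $N\in\mathbb N$, $h=(b-a)/N$, cell centers $(x_i,y_j,z_k)=(a+(i-\tfrac12)h,a+(j-\tfrac12)h,a+(k-\tfrac12)h)$, $1\le i,j,k\le N$. $\mathcal C$ is the space of cell-centered grid functions $u_{i,j,k}$, extended to ghost points by the discrete homogeneous Neumann condition $u_{0,j,k}=u_{1,j,k}$, $u_{N+1,j,k}=u_{N,j,k}$ (and likewise in $j$ and $k$). Operators: $D_xf_{i+1/2,j,k}=(f_{i+1,j,k}-f_{i,j,k})/h$, $A_xf_{i+1/2,j,k}=(f_{i+1,j,k}+f_{i,j,k})/2$; for face-centered $g$, $d_xg_{i,j,k}=(g_{i+1/2,j,k}-g_{i-1/2,j,k})/h$; analogously in $y,z$. $\nabla_hf=(D_xf,D_yf,D_zf)$, $\Delta_hf=d_xD_xf+d_yD_yf+d_zD_zf$, and for cell-centered $\mathcal D$, $\nabla_h\cdot(\mathcal D\nabla_hf):=d_x(A_x\mathcal D\,D_xf)+d_y(A_y\mathcal D\,D_yf)+d_z(A_z\mathcal D\,D_zf)$. Scheme (classical case: $f'(\rho)=\ln\rho$, $1/f''(\rho)=\rho$,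 $f'''(\rho)=-1/\rho^2$): parameters $\gamma,\mu,\alpha,\chi,\theta>0$, $\Delta t>0$. With $\hat\rho^{n+\frac12}=\big((\tfrac32\rho^n-\tfrac12\rho^{n-1})^2+\Delta t^8\big)^{1/2}$ pointwise, find $\rho^{n+1},\phi^{n+1}\in\mathcal C$ with $$\frac{\rho^{n+1}-\rho^n}{\Delta t}=\nabla_h\cdot\Big[\hat\rho^{n+\frac12}\nabla_h\Big(\gamma S^{n+\frac12}-\frac\chi2(\phi^{n+1}+\phi^n)+\frac{\chi^2\Delta t}{4\theta}(\rho^{n+1}-\rho^n)\Big)\Big],$$ $$\theta\frac{\phi^{n+1}-\phi^n}{\Delta t}=\frac\mu2\Delta_h(\phi^{n+1}+\phi^n)-\frac\alpha2(\phi^{n+1}+\phi^n)+\frac\chi2(\rho^{n+1}+\rho^n),$$ where $S^{n+\frac12}=\ln\rho^{n+1}-\frac{\rho^{n+1}-\rho^n}{2\rho^{n+1}}-\frac{(\rho^{n+1}-\rho^n)^2}{6(\rho^{n+1})^2}$ pointwise. *)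

theory Defs
  imports Complex_Main
begin

text \<open>Cell-centred grid functions on an N x N x N grid are functions on integer
  index triples; the cells are the triples in {1..N}^3. The space C is the set of
  such functions that vanish off the cells (so a grid function is determined by its
  cell values). Ghost values are obtained by the discrete homogeneous Neumann
  extension, i.e. clamping the indices to {1..N}.\<close>

type_synonym idx = "int \<times> int \<times> int"

definition cells :: "nat \<Rightarrow> idx set" where
  "cells N = {1..int N} \<times> {1..int N} \<times> {1..int N}"

definition gridC :: "nat \<Rightarrow> (idx \<Rightarrow> real) set" where
  "gridC N = {u. \<forall>p. p \<notin> cells N \<longrightarrow> u p = 0}"

definition clamp :: "nat \<Rightarrow> int \<Rightarrow> int" where
  "clamp N i = max 1 (min (int N) i)"

definition ext :: "nat \<Rightarrow> (idx \<Rightarrow> real) \<Rightarrow> idx \<Rightarrow> real" where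
  "ext N u p = (case p of (i, j, k) \<Rightarrow> u (clamp N i, clamp N j, clamp N k))"

definition padd :: "idx \<Rightarrow> idx \<Rightarrow> idx" where
  "padd p q = (case p of (i, j, k) \<Rightarrow> case q of (i', j', k') \<Rightarrow> (i + i', j + j', k + k'))"

definition psub :: "idx \<Rightarrow> idx \<Rightarrow> idx" where
  "psub p q = (case p of (i, j, k) \<Rightarrow> case q of (i', j', k') \<Rightarrow> (i - i', j - j', k - k'))"

definition dirs :: "idx list" where
  "dirs = [(1, 0, 0), (0, 1, 0), (0, 0, 1)]"

text \<open>Face-centred values are indexed by the lower adjacent cell:
  the value at the face p + e/2 is stored at index p.\<close>

definition Dface :: "real \<Rightarrow> nat \<Rightarrow> idx \<Rightarrow> (idx \<Rightarrow> real) \<Rightarrow> idx \<Rightarrow> real" where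
  "Dface h N e f p = (ext N f (padd p e) - ext N f p) / h"

definition Aface :: "nat \<Rightarrow> idx \<Rightarrow> (idx \<Rightarrow> real) \<Rightarrow> idx \<Rightarrow> real" where
  "Aface N e f p = (ext N f (padd p e) + ext N f p) / 2"

definition dcell :: "real \<Rightarrow> idx \<Rightarrow> (idx \<Rightarrow> real) \<Rightarrow> idx \<Rightarrow> real" where
  "dcell h e g p = (g p - g (psub p e)) / h"

definition lap_h :: "real \<Rightarrow> nat \<Rightarrow> (idx \<Rightarrow> real) \<Rightarrow> idx \<Rightarrow> real" where
  "lap_h h N f p = (\<Sum>e\<leftarrow>dirs. dcell h e (Dface h N e f) p)"

definition divgrad_h :: "real \<Rightarrow> nat \<Rightarrow> (idx \<Rightarrow> real) \<Rightarrow> (idx \<Rightarrow> real) \<Rightarrow> idx \<Rightarrow> real" where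
  "divgrad_h h N D f p = (\<Sum>e\<leftarrow>dirs. dcell h e (\<lambda>q. Aface N e D q * Dface h N e f q) p)"

definition scheme ::
  "real \<Rightarrow> real \<Rightarrow> nat \<Rightarrow> real \<Rightarrow> real \<Rightarrow> real \<Rightarrow> real \<Rightarrow> real \<Rightarrow> real \<Rightarrow>
   (idx \<Rightarrow> real) \<Rightarrow> (idx \<Rightarrow> real) \<Rightarrow> (idx \<Rightarrow> real) \<Rightarrow>
   (idx \<Rightarrow> real) \<Rightarrow> (idx \<Rightarrow> real) \<Rightarrow> bool" where
  "scheme a b N \<gamma> \<mu> \<alpha> \<chi> \<theta> dt rho_old rho phi rho_new phi_new \<longleftrightarrow>
     (let h = (b - a) / real N;
          rhat = (\<lambda>p. sqrt (((3/2) * rho p - (1/2) * rho_old p)\<^sup>2 + dt ^ 8));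
          S = (\<lambda>p. ln (rho_new p) - (rho_new p - rho p) / (2 * rho_new p)
                    - (rho_new p - rho p)\<^sup>2 / (6 * (rho_new p)\<^sup>2));
          W = (\<lambda>p. \<gamma> * S p - \<chi> / 2 * (phi_new p + phi p)
                    + \<chi>\<^sup>2 * dt / (4 * \<theta>) * (rho_new p - rho p));
          phisum = (\<lambda>p. phi_new p + phi p)
      in \<forall>p \<in> cells N.
           (rho_new p - rho p) / dt = divgrad_h h N rhat W p \<and>
           \<theta> * (phi_new p - phi p) / dt
             = \<mu> / 2 * lap_h h N phisum p - \<alpha> / 2 * phisum p
               + \<chi> / 2 * (rho_new p + rho p))"

end

theory Submission
  imports Defs "HOL-Analysis.Function_Topology"
begin


definition Ie :: "nat \<Rightarrow> idx \<Rightarrow> idx set" where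
  "Ie N e = {q \<in> cells N. padd q e \<in> cells N}"

definition msk :: "nat \<Rightarrow> (idx \<Rightarrow> idx \<Rightarrow> real) \<Rightarrow> idx \<Rightarrow> idx \<Rightarrow> real" where
  "msk N G e q = (if q \<in> Ie N e then G q e else 0)"

definition divF :: "real \<Rightarrow> nat \<Rightarrow> (idx \<Rightarrow> idx \<Rightarrow> real) \<Rightarrow> idx \<Rightarrow> real" where
  "divF h N G p = (\<Sum>e\<in>set dirs. (msk N G e p - msk N G e (psub p e)) / h)"

lemma set_dirs: "set dirs = {(1,0,0),(0,1,0),(0,0,1)}" by (simp add: dirs_def)
lemma distinct_dirs: "distinct dirs" by (simp add: dirs_def)
lemma sum_list_dirs: "(\<Sum>e\<leftarrow>dirs. f e) = (\<Sum>e\<in>set dirs. f e)"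
  by (rule sum_list_distinct_conv_sum_set[OF distinct_dirs])

lemma finite_cells[simp]: "finite (cells N)" by (simp add: cells_def)
lemma finite_Ie[simp]: "finite (Ie N e)" by (simp add: Ie_def)
lemma Ie_sub: "Ie N e \<subseteq> cells N" by (auto simp: Ie_def)

lemma padd_psub[simp]: "padd (psub p e) e = p" and psub_padd[simp]: "psub (padd p e) e = p"
  by (auto simp: padd_def psub_def split: prod.splits)

lemma clamp_in: "1 \<le> i \<Longrightarrow> i \<le> int N \<Longrightarrow> Defs.clamp N i = i" by (simp add: Defs.clamp_def)

lemma ext_cell: "p \<in> cells N \<Longrightarrow> ext N u p = u p"
  by (auto simp: ext_def cells_def clamp_in split: prod.splits)

lemma ext_out_plus: "p \<in> cells N \<Longrightarrow> e \<in> set dirs \<Longrightarrow> padd p e \<notin> cells N \<Longrightarrow> ext N u (padd p e) = u p"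
  by (auto simp: set_dirs ext_def cells_def Defs.clamp_def padd_def split: prod.splits intro!: arg_cong[where f=u])

lemma ext_out_minus: "p \<in> cells N \<Longrightarrow> e \<in> set dirs \<Longrightarrow> psub p e \<notin> cells N \<Longrightarrow> ext N u (psub p e) = u p"
  by (auto simp: set_dirs ext_def cells_def Defs.clamp_def psub_def split: prod.splits intro!: arg_cong[where f=u])

lemma divgrad_divF:
  assumes p: "p \<in> cells N"
  shows "divgrad_h h N D f p = divF h N (\<lambda>q e. Aface N e D q * ((f (padd q e) - f q) / h)) p"
  unfolding divgrad_h_def divF_def sum_list_dirs
proof (rule sum.cong[OF refl])
  fix e assume e: "e \<in> set dirs"
  let ?g = "\<lambda>q. Aface N e D q * Dface h N e f q"
  let ?G = "\<lambda>q e. Aface N e D q * ((f (padd q e) - f q) / h)"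
  have 1: "?g p = msk N ?G e p"
  proof (cases "p \<in> Ie N e")
    case True thus ?thesis using p by (simp add: msk_def Dface_def ext_cell Ie_def)
  next
    case False thus ?thesis using p e by (simp add: msk_def Dface_def ext_out_plus ext_cell Ie_def)
  qed
  have 2: "?g (psub p e) = msk N ?G e (psub p e)"
  proof (cases "psub p e \<in> cells N")
    case True thus ?thesis using p by (simp add: msk_def Dface_def ext_cell Ie_def)
  next
    case False thus ?thesis using p e by (simp add: msk_def Dface_def ext_out_minus ext_cell Ie_def)
  qed
  show "dcell h e ?g p = (msk N ?G e p - msk N ?G e (psub p e)) / h"
    unfolding dcell_def using 1 2 by simp
qed

lemma lap_divF:
  assumes p: "p \<in> cells N"
  shows "lap_h h N f p = divF h N (\<lambda>q e. (f (padd q e) - f q) / h) p"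
proof -
  have A1: "Aface N e (\<lambda>_. 1) q = 1" for e q by (simp add: Aface_def ext_def split: prod.splits)
  have "lap_h h N f p = divgrad_h h N (\<lambda>_. 1) f p"
    unfolding lap_h_def divgrad_h_def by (simp add: A1)
  also have "\<dots> = divF h N (\<lambda>q e. (f (padd q e) - f q) / h) p"
    using divgrad_divF[OF p, of h "\<lambda>_. 1" f] by (simp add: A1)
  finally show ?thesis .
qed

lemma sbp_e:
  "(\<Sum>p\<in>cells N. w p * (msk N G e p - msk N G e (psub p e)))
     = - (\<Sum>q\<in>Ie N e. (w (padd q e) - w q) * G q e)"
proof -
  have A: "(\<Sum>p\<in>cells N. w p * msk N G e p) = (\<Sum>q\<in>Ie N e. w q * G q e)"
    unfolding msk_def Ie_def by (simp add: sum.inter_filter if_distrib cong: if_cong)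
  have S: "{p \<in> cells N. psub p e \<in> Ie N e} = (\<lambda>q. padd q e) ` Ie N e"
  proof (intro set_eqI iffI)
    fix x assume "x \<in> {p \<in> cells N. psub p e \<in> Ie N e}"
    thus "x \<in> (\<lambda>q. padd q e) ` Ie N e" by (intro rev_image_eqI[of "psub x e"]) auto
  qed (auto simp: Ie_def)
  have inj: "inj_on (\<lambda>q. padd q e) (Ie N e)"
    by (metis inj_onI psub_padd)
  have "(\<Sum>p\<in>cells N. w p * msk N G e (psub p e))
      = (\<Sum>p\<in>{p \<in> cells N. psub p e \<in> Ie N e}. w p * G (psub p e) e)"
    unfolding msk_def by (simp add: sum.inter_filter if_distrib cong: if_cong)
  also have "\<dots> = (\<Sum>q\<in>Ie N e. w (padd q e) * G q e)"
    unfolding S by (simp add: sum.reindex[OF inj])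
  finally have B: "(\<Sum>p\<in>cells N. w p * msk N G e (psub p e)) = (\<Sum>q\<in>Ie N e. w (padd q e) * G q e)" .
  show ?thesis
    by (simp add: right_diff_distrib sum_subtractf A B left_diff_distrib)
qed

lemma sbp:
  "(\<Sum>p\<in>cells N. w p * divF h N G p)
     = - (\<Sum>e\<in>set dirs. \<Sum>q\<in>Ie N e. (w (padd q e) - w q) * G q e) / h"
proof -
  have "(\<Sum>p\<in>cells N. w p * divF h N G p)
      = (\<Sum>e\<in>set dirs. (\<Sum>p\<in>cells N. w p * (msk N G e p - msk N G e (psub p e))) / h)"
    unfolding divF_def by (simp add: sum_distrib_left sum_divide_distrib sum.swap[of _ "cells N"] mult.assoc)
  also have "\<dots> = (\<Sum>e\<in>set dirs. - (\<Sum>q\<in>Ie N e. (w (padd q e) - w q) * G q e) / h)"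
    by (simp add: sbp_e)
  finally show ?thesis by (simp add: sum_negf sum_divide_distrib)
qed

lemma divF_cong:
  assumes "\<And>e q. e \<in> set dirs \<Longrightarrow> q \<in> Ie N e \<Longrightarrow> G q e = H q e"
  shows "divF h N G p = divF h N H p"
proof -
  have "msk N G e q = msk N H e q" if "e \<in> set dirs" for e q
    using assms that unfolding msk_def by auto
  thus ?thesis unfolding divF_def by (intro sum.cong) auto
qed

lemma msk_lin: "msk N (\<lambda>q e. G q e + t * H q e) e q = msk N G e q + t * msk N H e q"
  by (simp add: msk_def)
lemma msk_diff: "msk N (\<lambda>q e. G q e - H q e) e q = msk N G e q - msk N H e q"
  by (simp add: msk_def)

lemma divF_lin:
  "divF h N (\<lambda>q e. G q e + t * H q e) p = divF h N G p + t * divF h N H p"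
  unfolding divF_def msk_lin sum_distrib_left sum.distrib[symmetric]
  by (intro sum.cong) (auto simp: algebra_simps diff_divide_distrib add_divide_distrib)

lemma divF_diff:
  "divF h N (\<lambda>q e. G q e - H q e) p = divF h N G p - divF h N H p"
  unfolding divF_def msk_diff sum_subtractf[symmetric]
  by (intro sum.cong) (auto simp: algebra_simps diff_divide_distrib add_divide_distrib)

lemma divF_zero: "divF h N (\<lambda>q e. 0) p = 0"
  unfolding divF_def msk_def by simp




definition S2 :: "real \<Rightarrow> real \<Rightarrow> real" where
  "S2 r x = ln x - 2/3 + 5*r/(6*x) - r^2/(6*x^2)"

definition Sf :: "real \<Rightarrow> real \<Rightarrow> real" where
  "Sf r x = ln x - (x - r) / (2 * x) - (x - r)\<^sup>2 / (6 * x\<^sup>2)"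

lemma Sf_S2: "x > 0 \<Longrightarrow> Sf r x = S2 r x"
  unfolding Sf_def S2_def by (simp add: field_simps power2_eq_square)

lemma S2_deriv: "x > 0 \<Longrightarrow> (S2 r has_real_derivative (x^2 - 5/6*r*x + r^2/3)/x^3) (at x)"
  unfolding S2_def
  by (rule derivative_eq_intros refl | simp)+ (simp add: field_simps power2_eq_square power3_eq_cube power4_eq_xxxx)

lemma S2_num_pos: "(x::real) > 0 \<Longrightarrow> x^2 - 5/6*r*x + r^2/3 > 0"
proof -
  assume x: "x > 0"
  have "x^2 - 5/6*r*x + r^2/3 = (x - 5/12*r)^2 + 23/144*r^2" by (simp add: power2_eq_square algebra_simps)
  moreover have "(x - 5/12*r)^2 + 23/144*r^2 > 0"
  proof (cases "r = 0")
    case True thus ?thesis using x by simp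
  next
    case False thus ?thesis by (simp add: add_nonneg_pos)
  qed
  ultimately show ?thesis by simp
qed

lemma S2_strict_mono: "0 < x1 \<Longrightarrow> x1 < x2 \<Longrightarrow> S2 r x1 < S2 r x2"
  by (rule DERIV_pos_imp_increasing[where f="S2 r"])
     (auto intro!: exI S2_deriv S2_num_pos divide_pos_pos)

lemma Sf_mono:
  assumes "x1 > 0" "x2 > 0"
  shows "(Sf r x1 - Sf r x2) * (x1 - x2) \<ge> 0"
    and "(Sf r x1 - Sf r x2) * (x1 - x2) = 0 \<Longrightarrow> x1 = x2"
proof -
  have c: "x1 < x2 \<Longrightarrow> Sf r x1 < Sf r x2" "x2 < x1 \<Longrightarrow> Sf r x2 < Sf r x1"
    using assms S2_strict_mono by (auto simp: Sf_S2)
  show "(Sf r x1 - Sf r x2) * (x1 - x2) \<ge> 0"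
    using c by (cases x1 x2 rule: linorder_cases) (auto intro: mult_nonpos_nonpos)
  show "(Sf r x1 - Sf r x2) * (x1 - x2) = 0 \<Longrightarrow> x1 = x2"
    using c by (cases x1 x2 rule: linorder_cases) auto
qed

definition Gf :: "real \<Rightarrow> real \<Rightarrow> real" where
  "Gf r x = x * ln x - 5*x/3 + 5*r/6 * ln x + r^2/(6*x)"

lemma Gf_deriv: "x > 0 \<Longrightarrow> (Gf r has_real_derivative S2 r x) (at x)"
  unfolding Gf_def S2_def
  by (rule derivative_eq_intros refl | simp)+ (simp add: field_simps power2_eq_square)




locale grid =
  fixes N :: nat and h dt \<gamma> \<mu> \<alpha> \<chi> \<theta> :: real and rho_old rho phi :: "idx \<Rightarrow> real"
  assumes hpos: "h > 0" and dtpos: "dt > 0" and gpos: "\<gamma> > 0" and mupos: "\<mu> > 0"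
    and alpos: "\<alpha> > 0" and chipos: "\<chi> > 0" and thpos: "\<theta> > 0"
    and rho_pos: "\<forall>p \<in> cells N. rho p > 0" and Npos: "N \<ge> 1"
begin

definition rhat :: "idx \<Rightarrow> real" where
  "rhat = (\<lambda>p. sqrt (((3/2) * rho p - (1/2) * rho_old p)\<^sup>2 + dt ^ 8))"

definition kap :: "idx \<Rightarrow> idx \<Rightarrow> real" where
  "kap e q = Aface N e rhat q"

lemma rhat_pos: "rhat p > 0"
  unfolding rhat_def using dtpos by (intro real_sqrt_gt_zero add_nonneg_pos) auto

lemma kap_pos: "kap e q > 0"
  unfolding kap_def Aface_def ext_def using rhat_pos by (simp split: prod.splits add: add_pos_pos)

definition cc :: real where "cc = \<chi>\<^sup>2 * dt / (4 * \<theta>)"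

definition Wf :: "(idx \<Rightarrow> real) \<Rightarrow> (idx \<Rightarrow> real) \<Rightarrow> idx \<Rightarrow> real" where
  "Wf rn fn = (\<lambda>p. \<gamma> * (ln (rn p) - (rn p - rho p) / (2 * rn p) - (rn p - rho p)\<^sup>2 / (6 * (rn p)\<^sup>2))
                    - \<chi> / 2 * (fn p + phi p) + \<chi>\<^sup>2 * dt / (4 * \<theta>) * (rn p - rho p))"

definition flux :: "(idx \<Rightarrow> real) \<Rightarrow> idx \<Rightarrow> idx \<Rightarrow> real" where
  "flux W q e = kap e q * ((W (padd q e) - W q) / h)"

definition fluxL :: "(idx \<Rightarrow> real) \<Rightarrow> idx \<Rightarrow> idx \<Rightarrow> real" where
  "fluxL u q e = (u (padd q e) - u q) / h"

definition EQ :: "(idx \<Rightarrow> real) \<Rightarrow> (idx \<Rightarrow> real) \<Rightarrow> bool" where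
  "EQ rn fn \<longleftrightarrow> (\<forall>p \<in> cells N.
     (rn p - rho p) / dt = divF h N (flux (Wf rn fn)) p \<and>
     \<theta> * (fn p - phi p) / dt = \<mu> / 2 * (divF h N (fluxL fn) p + lap_h h N phi p)
        - \<alpha> / 2 * (fn p + phi p) + \<chi> / 2 * (rn p + rho p))"

lemma scheme_EQ:
  assumes "h = (b - a) / real N"
  shows "scheme a b N \<gamma> \<mu> \<alpha> \<chi> \<theta> dt rho_old rho phi rn fn \<longleftrightarrow> EQ rn fn"
proof -
  have L: "lap_h h N (\<lambda>p. fn p + phi p) p = divF h N (fluxL fn) p + lap_h h N phi p"
    if p: "p \<in> cells N" for p
  proof -
    have "lap_h h N (\<lambda>p. fn p + phi p) p = divF h N (\<lambda>q e. fluxL fn q e + 1 * fluxL phi q e) p"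
      unfolding lap_divF[OF p] fluxL_def by (rule divF_cong) (use hpos in \<open>simp add: field_simps\<close>)
    also have "\<dots> = divF h N (fluxL fn) p + lap_h h N phi p"
      unfolding divF_lin lap_divF[OF p] fluxL_def by simp
    finally show ?thesis .
  qed
  have D: "divgrad_h h N rhat (Wf rn fn) p = divF h N (flux (Wf rn fn)) p" if p: "p \<in> cells N" for p
    unfolding divgrad_divF[OF p] flux_def kap_def ..
  show ?thesis
    unfolding scheme_def Let_def EQ_def assms[symmetric] rhat_def[symmetric] Wf_def[symmetric]
  proof (intro ball_cong refl)
    fix p assume p: "p \<in> cells N"
    show "((rn p - rho p) / dt = divgrad_h h N rhat (Wf rn fn) p \<and>
      \<theta> * (fn p - phi p) / dt = \<mu> / 2 * lap_h h N (\<lambda>p. fn p + phi p) p - \<alpha> / 2 * (fn p + phi p) +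
        \<chi> / 2 * (rn p + rho p)) =
     ((rn p - rho p) / dt = divF h N (flux (Wf rn fn)) p \<and>
      \<theta> * (fn p - phi p) / dt = \<mu> / 2 * (divF h N (fluxL fn) p + lap_h h N phi p) - \<alpha> / 2 * (fn p + phi p) +
        \<chi> / 2 * (rn p + rho p))" using L[OF p] D[OF p] by simp
  qed
qed

lemma Wf_diff: "Wf rn1 fn1 p - Wf rn2 fn2 p = \<gamma> * (Sf (rho p) (rn1 p) - Sf (rho p) (rn2 p))
    - \<chi>/2 * (fn1 p - fn2 p) + cc * (rn1 p - rn2 p)"
  unfolding Wf_def Sf_def cc_def using thpos by (simp add: field_simps)

lemma sbp_flux_nonneg: "(\<Sum>e\<in>set dirs. \<Sum>q\<in>Ie N e. (W (padd q e) - W q) * flux W q e) \<ge> 0"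
proof (intro sum_nonneg)
  fix e q
  have "(W (padd q e) - W q) * flux W q e = kap e q * (W (padd q e) - W q)^2 / h"
    unfolding flux_def by (simp add: power2_eq_square)
  thus "(W (padd q e) - W q) * flux W q e \<ge> 0" using kap_pos[of e q] hpos by simp
qed

lemma sbp_fluxL_nonneg: "(\<Sum>e\<in>set dirs. \<Sum>q\<in>Ie N e. (W (padd q e) - W q) * fluxL W q e) \<ge> 0"
proof (intro sum_nonneg)
  fix e q
  have "(W (padd q e) - W q) * fluxL W q e = (W (padd q e) - W q)^2 / h"
    unfolding fluxL_def by (simp add: power2_eq_square)
  thus "(W (padd q e) - W q) * fluxL W q e \<ge> 0" using hpos by simp
qed

lemma unique:
  assumes pos1: "\<forall>p\<in>cells N. rn1 p > 0" and pos2: "\<forall>p\<in>cells N. rn2 p > 0"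
    and E1: "EQ rn1 fn1" and E2: "EQ rn2 fn2"
  shows "\<forall>p\<in>cells N. rn1 p = rn2 p \<and> fn1 p = fn2 p"
proof -
  define dx where "dx p = rn1 p - rn2 p" for p
  define dy where "dy p = fn1 p - fn2 p" for p
  define dW where "dW p = Wf rn1 fn1 p - Wf rn2 fn2 p" for p
  define dS where "dS p = Sf (rho p) (rn1 p) - Sf (rho p) (rn2 p)" for p
  define Ld where "Ld p = divF h N (fluxL dy) p" for p
  define k where "k = \<theta> / dt"
  define v where "v p = \<alpha>/2 * dy p - \<mu>/2 * Ld p" for p
  have kpos: "k > 0" unfolding k_def using thpos dtpos by simp
  have cck: "cc = \<chi>^2 / (4 * k)" unfolding cc_def k_def using dtpos thpos by (simp add: field_simps)
  have dWe: "dW p = \<gamma> * dS p - \<chi>/2 * dy p + cc * dx p" for p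
    unfolding dW_def dS_def dx_def dy_def Wf_diff ..
  have hx: "dx p = dt * divF h N (flux dW) p" if p: "p \<in> cells N" for p
  proof -
    have a: "rn1 p - rho p = dt * divF h N (flux (Wf rn1 fn1)) p" "rn2 p - rho p = dt * divF h N (flux (Wf rn2 fn2)) p"
      using E1 E2 p dtpos unfolding EQ_def by (auto simp: field_simps)
    have "divF h N (flux dW) p = divF h N (\<lambda>q e. flux (Wf rn1 fn1) q e - flux (Wf rn2 fn2) q e) p"
      unfolding flux_def dW_def by (rule divF_cong) (use hpos in \<open>simp add: field_simps\<close>)
    also have "\<dots> = divF h N (flux (Wf rn1 fn1)) p - divF h N (flux (Wf rn2 fn2)) p" by (rule divF_diff)
    finally show ?thesis using a unfolding dx_def by (simp add: right_diff_distrib)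
  qed
  have hy: "\<theta> * dy p / dt = \<mu>/2 * Ld p - \<alpha>/2 * dy p + \<chi>/2 * dx p" if p: "p \<in> cells N" for p
  proof -
    have a: "\<theta> * (fn1 p - phi p) / dt = \<mu> / 2 * (divF h N (fluxL fn1) p + lap_h h N phi p)
        - \<alpha> / 2 * (fn1 p + phi p) + \<chi> / 2 * (rn1 p + rho p)"
      "\<theta> * (fn2 p - phi p) / dt = \<mu> / 2 * (divF h N (fluxL fn2) p + lap_h h N phi p)
        - \<alpha> / 2 * (fn2 p + phi p) + \<chi> / 2 * (rn2 p + rho p)"
      using E1 E2 p unfolding EQ_def by auto
    have "Ld p = divF h N (\<lambda>q e. fluxL fn1 q e - fluxL fn2 q e) p"
      unfolding Ld_def fluxL_def dy_def by (rule divF_cong) (use hpos in \<open>simp add: field_simps\<close>)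
    also have "\<dots> = divF h N (fluxL fn1) p - divF h N (fluxL fn2) p" by (rule divF_diff)
    finally have "Ld p = divF h N (fluxL fn1) p - divF h N (fluxL fn2) p" .
    note Ld = this
    have "\<theta> * dy p / dt = \<theta> * (fn1 p - phi p) / dt - \<theta> * (fn2 p - phi p) / dt"
      unfolding dy_def using dtpos by (simp add: field_simps)
    also have "\<dots> = (\<mu> / 2 * (divF h N (fluxL fn1) p + lap_h h N phi p)
        - \<alpha> / 2 * (fn1 p + phi p) + \<chi> / 2 * (rn1 p + rho p)) - (\<mu> / 2 * (divF h N (fluxL fn2) p + lap_h h N phi p)
        - \<alpha> / 2 * (fn2 p + phi p) + \<chi> / 2 * (rn2 p + rho p))" using a by simp
    also have "\<dots> = \<mu>/2 * Ld p - \<alpha>/2 * dy p + \<chi>/2 * dx p"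
      unfolding Ld dy_def dx_def by (simp add: field_simps)
    finally show ?thesis .
  qed
  have hx2: "dx p = 2/\<chi> * (k * dy p + v p)" if p: "p \<in> cells N" for p
    using hy[OF p] chipos dtpos unfolding k_def v_def by (simp add: field_simps)
  have pt: "dW p * dx p = \<gamma> * (dS p * dx p) + dy p * v p + (v p)^2 / k" if p: "p \<in> cells N" for p
    unfolding dWe hx2[OF p] cck using chipos kpos by (simp add: field_simps power2_eq_square)
  have s1: "(\<Sum>p\<in>cells N. dW p * dx p) \<le> 0"
  proof -
    have "(\<Sum>p\<in>cells N. dW p * dx p) = dt * (\<Sum>p\<in>cells N. dW p * divF h N (flux dW) p)"
      by (simp add: hx sum_distrib_left mult.left_commute)
    also have "\<dots> = dt * (- (\<Sum>e\<in>set dirs. \<Sum>q\<in>Ie N e. (dW (padd q e) - dW q) * flux dW q e) / h)"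
      by (simp only: sbp)
    also have "\<dots> \<le> 0" using sbp_flux_nonneg[of dW] dtpos hpos
      by (simp add: mult_nonneg_nonneg divide_nonneg_pos)
    finally show ?thesis .
  qed
  have s2: "(\<Sum>p\<in>cells N. dy p * v p) \<ge> 0"
  proof -
    have "(\<Sum>p\<in>cells N. dy p * v p) = \<alpha>/2 * (\<Sum>p\<in>cells N. (dy p)^2) - \<mu>/2 * (\<Sum>p\<in>cells N. dy p * Ld p)"
      unfolding v_def by (simp add: sum_distrib_left sum_subtractf algebra_simps power2_eq_square)
    also have "(\<Sum>p\<in>cells N. dy p * Ld p) = - (\<Sum>e\<in>set dirs. \<Sum>q\<in>Ie N e. (dy (padd q e) - dy q) * fluxL dy q e) / h"
      unfolding Ld_def by (rule sbp)
    finally show ?thesis using sbp_fluxL_nonneg[of dy] alpos mupos hpos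
      by (auto intro!: add_nonneg_nonneg mult_nonneg_nonneg sum_nonneg divide_nonneg_pos)
  qed
  have s3: "(\<Sum>p\<in>cells N. (v p)^2 / k) \<ge> 0" using kpos by (auto intro!: sum_nonneg)
  have s4: "(\<Sum>p\<in>cells N. dS p * dx p) \<ge> 0"
    unfolding dS_def dx_def using pos1 pos2 Sf_mono(1) by (auto intro!: sum_nonneg)
  have tot: "(\<Sum>p\<in>cells N. dW p * dx p) = \<gamma> * (\<Sum>p\<in>cells N. dS p * dx p)
      + (\<Sum>p\<in>cells N. dy p * v p) + (\<Sum>p\<in>cells N. (v p)^2 / k)"
    by (simp add: pt sum.distrib sum_distrib_left)
  have z4: "(\<Sum>p\<in>cells N. dS p * dx p) = 0" and z2: "(\<Sum>p\<in>cells N. dy p * v p) = 0"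
  proof -
    have gA: "\<gamma> * (\<Sum>p\<in>cells N. dS p * dx p) \<ge> 0" using s4 gpos by simp
    hence "\<gamma> * (\<Sum>p\<in>cells N. dS p * dx p) = 0" "(\<Sum>p\<in>cells N. dy p * v p) = 0"
      using s1 s2 s3 tot by linarith+
    thus "(\<Sum>p\<in>cells N. dS p * dx p) = 0" "(\<Sum>p\<in>cells N. dy p * v p) = 0" using gpos by simp_all
  qed
  have dx0: "dx p = 0" if p: "p \<in> cells N" for p
  proof -
    have "dS p * dx p = 0"
      using z4 p sum_nonneg_eq_0_iff[of "cells N" "\<lambda>p. dS p * dx p"] pos1 pos2 Sf_mono(1)
      unfolding dS_def dx_def by auto
    thus ?thesis using Sf_mono(2)[of "rn1 p" "rn2 p"] pos1 pos2 p unfolding dS_def dx_def by auto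
  qed
  have "(\<Sum>p\<in>cells N. dy p * v p) = - k * (\<Sum>p\<in>cells N. (dy p)^2)"
  proof -
    have "v p = - k * dy p" if "p \<in> cells N" for p
      using hx2[OF that] dx0[OF that] chipos by (simp add: field_simps)
    thus ?thesis by (simp add: sum_distrib_left power2_eq_square mult.left_commute)
  qed
  hence "(\<Sum>p\<in>cells N. (dy p)^2) = 0" using z2 kpos by simp
  hence dy0: "dy p = 0" if "p \<in> cells N" for p
    using that sum_nonneg_eq_0_iff[of "cells N" "\<lambda>p. (dy p)^2"] by auto
  show ?thesis using dx0 dy0 unfolding dx_def dy_def by auto
qed

end



context grid begin

definition o0 :: idx where "o0 = (0,0,0)"
lemma o0_notin: "o0 \<notin> set dirs" by (simp add: o0_def set_dirs)

definition gg :: "idx \<Rightarrow> real" where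
  "gg p = (\<theta>/dt - \<alpha>/2) * phi p + \<mu>/2 * lap_h h N phi p + \<chi>/2 * rho p"
definition aa :: real where "aa = \<theta>/dt + \<alpha>/2"

definition P :: "idx \<Rightarrow> real \<Rightarrow> real \<Rightarrow> real" where
  "P p x y = \<gamma> * Gf (rho p) x + cc/2 * (x - rho p)^2 - \<chi>/2 * (y + phi p) * x + aa/2 * y^2 - gg p * y"
definition Px :: "idx \<Rightarrow> real \<Rightarrow> real \<Rightarrow> real" where
  "Px p x y = \<gamma> * Sf (rho p) x + cc * (x - rho p) - \<chi>/2 * (y + phi p)"
definition Py :: "idx \<Rightarrow> real \<Rightarrow> real \<Rightarrow> real" where
  "Py p x y = aa * y - gg p - \<chi>/2 * x"

lemma P_deriv:
  assumes x: "x > 0"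
  shows "((\<lambda>t. P p (x + t * b) (y + t * d)) has_real_derivative Px p x y * b + Py p x y * d) (at 0)"
proof -
  have G: "((\<lambda>t. Gf (rho p) (x + t * b)) has_real_derivative S2 (rho p) x * b) (at 0)"
  proof -
    have L: "((\<lambda>t. x + t*b) has_real_derivative b) (at 0)" by (rule derivative_eq_intros refl | simp)+
    have "((\<lambda>t. Gf (rho p) (x + t*b)) has_real_derivative S2 (rho p) (x + 0*b) * b) (at 0)"
      by (rule DERIV_chain2[OF _ L]) (simp add: Gf_deriv x)
    thus ?thesis by simp
  qed
  show ?thesis unfolding P_def
    by (rule derivative_eq_intros G refl | simp)+ (simp add: Px_def Py_def Sf_S2[OF x] algebra_simps)
qed

definition Fz :: "(idx \<times> idx \<Rightarrow> real) \<Rightarrow> idx \<Rightarrow> idx \<Rightarrow> real" where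
  "Fz z = (\<lambda>q e. z (q, e))"
definition xv :: "(idx \<times> idx \<Rightarrow> real) \<Rightarrow> idx \<Rightarrow> real" where
  "xv z p = rho p + dt * divF h N (Fz z) p"

definition E1 :: "(idx \<times> idx \<Rightarrow> real) \<Rightarrow> real" where
  "E1 z = (\<Sum>e\<in>set dirs. \<Sum>q\<in>Ie N e. dt * (z (q,e))^2 / (2 * kap e q))"
definition E2 :: "(idx \<times> idx \<Rightarrow> real) \<Rightarrow> real" where
  "E2 z = (\<Sum>p\<in>cells N. P p (xv z p) (z (p,o0)))"
definition E3 :: "(idx \<times> idx \<Rightarrow> real) \<Rightarrow> real" where
  "E3 z = \<mu>/4 * (\<Sum>e\<in>set dirs. \<Sum>q\<in>Ie N e. ((z (padd q e,o0) - z (q,o0)) / h)^2)"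
definition EE :: "(idx \<times> idx \<Rightarrow> real) \<Rightarrow> real" where
  "EE z = E1 z + E2 z + E3 z"

definition EE' :: "(idx \<times> idx \<Rightarrow> real) \<Rightarrow> (idx \<times> idx \<Rightarrow> real) \<Rightarrow> real" where
  "EE' z v = (\<Sum>e\<in>set dirs. \<Sum>q\<in>Ie N e. dt * z (q,e) * v (q,e) / kap e q)
    + (\<Sum>p\<in>cells N. Px p (xv z p) (z (p,o0)) * (dt * divF h N (Fz v) p) + Py p (xv z p) (z (p,o0)) * v (p,o0))
    + \<mu>/2 * (\<Sum>e\<in>set dirs. \<Sum>q\<in>Ie N e. ((z (padd q e,o0) - z (q,o0)) / h) * ((v (padd q e,o0) - v (q,o0)) / h))"

lemma xv_lin: "xv (\<lambda>i. z i + t * v i) p = xv z p + t * (dt * divF h N (Fz v) p)"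
proof -
  have "Fz (\<lambda>i. z i + t * v i) = (\<lambda>q e. Fz z q e + t * Fz v q e)" by (simp add: Fz_def)
  thus ?thesis unfolding xv_def by (simp add: divF_lin algebra_simps)
qed

lemma EE_deriv:
  assumes pos: "\<forall>p\<in>cells N. xv z p > 0"
  shows "((\<lambda>t. EE (\<lambda>i. z i + t * v i)) has_real_derivative EE' z v) (at 0)"
proof -
  have d1: "((\<lambda>t. E1 (\<lambda>i. z i + t * v i)) has_real_derivative
      (\<Sum>e\<in>set dirs. \<Sum>q\<in>Ie N e. dt * z (q,e) * v (q,e) / kap e q)) (at 0)"
    unfolding E1_def
  proof (intro DERIV_sum)
    fix e q
    show "((\<lambda>t. dt * (z (q, e) + t * v (q, e))\<^sup>2 / (2 * kap e q)) has_real_derivative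
       dt * z (q, e) * v (q, e) / kap e q) (at 0)"
      apply (rule derivative_eq_intros refl | simp)+
      using kap_pos[of e q] apply simp
      by (simp add: field_simps power2_eq_square)
  qed
  have d2: "((\<lambda>t. E2 (\<lambda>i. z i + t * v i)) has_real_derivative
      (\<Sum>p\<in>cells N. Px p (xv z p) (z (p,o0)) * (dt * divF h N (Fz v) p) + Py p (xv z p) (z (p,o0)) * v (p,o0))) (at 0)"
    unfolding E2_def xv_lin
    by (intro DERIV_sum P_deriv) (use pos in auto)
  have d3: "((\<lambda>t. E3 (\<lambda>i. z i + t * v i)) has_real_derivative
      \<mu>/2 * (\<Sum>e\<in>set dirs. \<Sum>q\<in>Ie N e. ((z (padd q e,o0) - z (q,o0)) / h) * ((v (padd q e,o0) - v (q,o0)) / h))) (at 0)"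
  proof -
    have eq: "\<mu>/4 * (\<Sum>e\<in>set dirs. \<Sum>q\<in>Ie N e. 2 * (((z (padd q e,o0) - z (q,o0)) / h) * ((v (padd q e,o0) - v (q,o0)) / h)))
       = \<mu>/2 * (\<Sum>e\<in>set dirs. \<Sum>q\<in>Ie N e. ((z (padd q e,o0) - z (q,o0)) / h) * ((v (padd q e,o0) - v (q,o0)) / h))"
      unfolding sum_distrib_left[symmetric] by simp
    have "((\<lambda>t. \<mu>/4 * (\<Sum>e\<in>set dirs. \<Sum>q\<in>Ie N e. (((z (padd q e,o0) + t * v (padd q e,o0)) - (z (q,o0) + t * v (q,o0))) / h)^2))
       has_real_derivative \<mu>/4 * (\<Sum>e\<in>set dirs. \<Sum>q\<in>Ie N e. 2 * (((z (padd q e,o0) - z (q,o0)) / h) * ((v (padd q e,o0) - v (q,o0)) / h)))) (at 0)"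
    proof (intro DERIV_cmult DERIV_sum)
      fix e q
      show "((\<lambda>t. ((z (padd q e, o0) + t * v (padd q e, o0) - (z (q, o0) + t * v (q, o0))) / h)\<^sup>2) has_real_derivative
         2 * ((z (padd q e, o0) - z (q, o0)) / h * ((v (padd q e, o0) - v (q, o0)) / h))) (at 0)"
        using hpos by (auto intro!: derivative_eq_intros simp: field_simps power2_eq_square)
    qed
    thus ?thesis unfolding E3_def eq .
  qed
  show ?thesis unfolding EE_def EE'_def
    by (intro DERIV_add d1 d2 d3)
qed

end



context grid begin

definition Wm :: "(idx \<times> idx \<Rightarrow> real) \<Rightarrow> idx \<Rightarrow> real" where
  "Wm z p = Px p (xv z p) (z (p,o0))"
definition yz :: "(idx \<times> idx \<Rightarrow> real) \<Rightarrow> idx \<Rightarrow> real" where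
  "yz z p = z (p,o0)"

lemma EE'_formula:
  "EE' z v = (\<Sum>e\<in>set dirs. \<Sum>q\<in>Ie N e. v (q,e) * (dt * z (q,e) / kap e q - dt / h * (Wm z (padd q e) - Wm z q)))
     + (\<Sum>p\<in>cells N. v (p,o0) * (Py p (xv z p) (z (p,o0)) - \<mu>/2 * divF h N (fluxL (yz z)) p))"
proof -
  have a: "(\<Sum>p\<in>cells N. Wm z p * divF h N (Fz v) p)
      = - (\<Sum>e\<in>set dirs. \<Sum>q\<in>Ie N e. (Wm z (padd q e) - Wm z q) * v (q,e)) / h"
    by (simp add: sbp Fz_def)
  have b: "(\<Sum>p\<in>cells N. v (p,o0) * divF h N (fluxL (yz z)) p)
      = - (\<Sum>e\<in>set dirs. \<Sum>q\<in>Ie N e. (v (padd q e,o0) - v (q,o0)) * fluxL (yz z) q e) / h"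
    by (rule sbp)
  have T2: "(\<Sum>p\<in>cells N. Px p (xv z p) (z (p,o0)) * (dt * divF h N (Fz v) p) + Py p (xv z p) (z (p,o0)) * v (p,o0))
     = dt * (\<Sum>p\<in>cells N. Wm z p * divF h N (Fz v) p) + (\<Sum>p\<in>cells N. v (p,o0) * Py p (xv z p) (z (p,o0)))"
    unfolding Wm_def by (simp add: sum.distrib sum_distrib_left algebra_simps)
  have T3: "\<mu>/2 * (\<Sum>e\<in>set dirs. \<Sum>q\<in>Ie N e. ((z (padd q e,o0) - z (q,o0)) / h) * ((v (padd q e,o0) - v (q,o0)) / h))
     = - (\<mu>/2 * (\<Sum>p\<in>cells N. v (p,o0) * divF h N (fluxL (yz z)) p))"
    unfolding b fluxL_def yz_def by (simp add: sum_divide_distrib algebra_simps)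
  have R: "(\<Sum>e\<in>set dirs. \<Sum>q\<in>Ie N e. v (q,e) * (dt * z (q,e) / kap e q - dt / h * (Wm z (padd q e) - Wm z q)))
     + (\<Sum>p\<in>cells N. v (p,o0) * (Py p (xv z p) (z (p,o0)) - \<mu>/2 * divF h N (fluxL (yz z)) p))
     = (\<Sum>e\<in>set dirs. \<Sum>q\<in>Ie N e. dt * z (q,e) * v (q,e) / kap e q)
       - dt / h * (\<Sum>e\<in>set dirs. \<Sum>q\<in>Ie N e. (Wm z (padd q e) - Wm z q) * v (q,e))
       + (\<Sum>p\<in>cells N. v (p,o0) * Py p (xv z p) (z (p,o0)))
       - \<mu>/2 * (\<Sum>p\<in>cells N. v (p,o0) * divF h N (fluxL (yz z)) p)"
    by (simp add: right_diff_distrib sum_subtractf sum_distrib_left sum.distrib algebra_simps)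
  show ?thesis unfolding EE'_def T2 T3 R a by (simp add: algebra_simps)
qed

definition dl :: "idx \<times> idx \<Rightarrow> idx \<times> idx \<Rightarrow> real" where
  "dl i = (\<lambda>j. if j = i then 1 else 0)"

lemma dl_mult: "dl i j * B = (if j = i then B else 0)" by (simp add: dl_def)

lemma dsum2:
  assumes "e0 \<in> set dirs" "q0 \<in> Ie N e0"
  shows "(\<Sum>e\<in>set dirs. \<Sum>q\<in>Ie N e. dl (q0,e0) (q,e) * B q e) = B q0 e0"
proof -
  have "(\<Sum>q\<in>Ie N e. dl (q0,e0) (q,e) * B q e) = (if e = e0 then B q0 e0 else 0)" for e
  proof (cases "e = e0")
    case True thus ?thesis using assms(2) by (simp add: dl_mult)
  qed (simp add: dl_mult)
  thus ?thesis using assms(1) by simp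
qed

lemma grad_flux:
  assumes "e0 \<in> set dirs" "q0 \<in> Ie N e0"
  shows "EE' z (dl (q0,e0)) = dt * z (q0,e0) / kap e0 q0 - dt / h * (Wm z (padd q0 e0) - Wm z q0)"
proof -
  have "dl (q0,e0) (p,o0) = 0" for p using assms(1) o0_notin by (auto simp: dl_def)
  thus ?thesis unfolding EE'_formula dsum2[OF assms] by simp
qed

lemma grad_y:
  assumes "p0 \<in> cells N"
  shows "EE' z (dl (p0,o0)) = Py p0 (xv z p0) (z (p0,o0)) - \<mu>/2 * divF h N (fluxL (yz z)) p0"
proof -
  have "dl (p0,o0) (q,e) = 0" if "e \<in> set dirs" for q e using that o0_notin by (auto simp: dl_def)
  hence "(\<Sum>e\<in>set dirs. \<Sum>q\<in>Ie N e. dl (p0,o0) (q,e) * B q e) = 0" for B by simp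
  moreover have "(\<Sum>p\<in>cells N. dl (p0,o0) (p,o0) * C p) = C p0" for C
    using assms by (simp add: dl_mult)
  ultimately show ?thesis unfolding EE'_formula by simp
qed

end



lemma xlnx_bound: "(x::real) > 0 \<Longrightarrow> x * ln x - B * x \<ge> - exp B"
proof -
  assume x: "x > 0"
  define u where "u = x / exp B"
  have u: "u > 0" using x by (simp add: u_def)
  have xu: "x = exp B * u" by (simp add: u_def)
  have lnx: "ln x = B + ln u" using u by (simp add: xu ln_mult)
  have "ln (1/u) \<le> 1/u - 1" using u by (intro ln_le_minus_one) simp
  hence "- ln u \<le> 1/u - 1" using u by (simp add: ln_div)
  hence "u * (- ln u) \<le> u * (1/u - 1)" using u by (intro mult_left_mono) auto
  hence "- u * ln u \<le> 1 - u" using u by (simp add: algebra_simps)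
  hence "u * ln u \<ge> -1" using u by linarith
  hence "exp B * (u * ln u) \<ge> exp B * (-1)" by (intro mult_left_mono) auto
  moreover have "x * ln x - B * x = x * ln u" using lnx by (simp add: algebra_simps)
  moreover have "x * ln u = exp B * (u * ln u)" by (simp add: xu)
  ultimately show ?thesis by simp
qed

lemma ln_bound2:
  assumes x: "(x::real) > 0" and r: "r > 0"
  shows "5*r/6 * ln x + r^2/(6*x) \<ge> 5*r/6 * (ln (r/10) + 1) + r^2/(12*x)"
proof -
  have "ln ((r/10)/x) \<le> (r/10)/x - 1" using x r by (intro ln_le_minus_one) simp
  moreover have "ln ((r/10)/x) = ln (r/10) - ln x" using x r by (simp add: ln_div ln_mult)
  ultimately have "ln (r/10) - ln x \<le> (r/10)/x - 1" by simp
  hence "ln x \<ge> ln (r/10) + 1 - r/(10*x)" by simp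
  hence "5*r/6 * ln x \<ge> 5*r/6 * (ln (r/10) + 1 - r/(10*x))" using r by (intro mult_left_mono) auto
  moreover have "5*r/6 * (ln (r/10) + 1 - r/(10*x)) = 5*r/6 * (ln (r/10) + 1) - r^2/(12*x)"
    using x by (simp add: field_simps power2_eq_square)
  moreover have "r^2/(6*x) = r^2/(12*x) + r^2/(12*x)" using x by (simp add: field_simps)
  ultimately show ?thesis by linarith
qed

lemma quad_bound: "(a::real) > 0 \<Longrightarrow> a/4 * y^2 - g * y \<ge> a/8 * y^2 - 2 * g^2 / a"
proof -
  assume a: "a > 0"
  have "0 \<le> a/8 * (y - 4*g/a)^2" using a by simp
  also have "a/8 * (y - 4*g/a)^2 = a/8*y^2 - g*y + 2*g^2/a" using a by (simp add: field_simps power2_eq_square)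
  finally show ?thesis by simp
qed

context grid begin

lemma P_lower:
  assumes p: "p \<in> cells N"
  shows "\<exists>C. \<forall>x>0. \<forall>y. P p x y \<ge> \<gamma> * (rho p)^2 / (12 * x) + \<alpha>/8 * y^2 - C"
proof -
  define r where "r = rho p"
  have r: "r > 0" using rho_pos p by (simp add: r_def)
  define k where "k = \<theta> / dt"
  have k: "k > 0" using thpos dtpos by (simp add: k_def)
  define B where "B = 5/3 + (cc * r + \<chi>/2 * phi p) / \<gamma>"
  have id: "P p x y = \<gamma> * (x * ln x - B * x) + \<gamma> * (5*r/6 * ln x + r^2/(6*x))
      + (\<chi> * x / 2 - k * y)^2 / (2 * k) + (\<alpha>/4 * y^2 - gg p * y) + cc * r^2 / 2" for x y
  proof -
    have cck: "cc = \<chi>^2 / (4 * k)" unfolding cc_def k_def using dtpos thpos by (simp add: field_simps)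
    have aak: "aa = k + \<alpha>/2" unfolding aa_def k_def ..
    have i1: "\<gamma> * (x * ln x - B * x) = \<gamma> * (x * ln x) - 5/3 * \<gamma> * x - cc * r * x - \<chi>/2 * phi p * x"
      unfolding B_def using gpos by (simp add: field_simps)
    have i2: "(\<chi> * x / 2 - k * y)^2 / (2 * k) = cc/2 * x^2 - \<chi>/2 * x * y + k/2 * y^2"
      unfolding cck using k by (simp add: field_simps power2_eq_square)
    show ?thesis unfolding i1 i2 P_def Gf_def aak r_def
      by (simp add: field_simps power2_eq_square)
  qed
  show ?thesis
  proof (intro exI allI impI)
    fix x y :: real assume x: "x > 0"
    have 1: "\<gamma> * (x * ln x - B * x) \<ge> \<gamma> * (- exp B)"
      using xlnx_bound[OF x, of B] gpos by (intro mult_left_mono) auto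
    have 2: "\<gamma> * (5*r/6 * ln x + r^2/(6*x)) \<ge> \<gamma> * (5*r/6 * (ln (r/10) + 1) + r^2/(12*x))"
      using ln_bound2[OF x r] gpos by (intro mult_left_mono) auto
    have 3: "(\<chi> * x / 2 - k * y)^2 / (2 * k) \<ge> 0" using k by simp
    have 4: "\<alpha>/4 * y^2 - gg p * y \<ge> \<alpha>/8 * y^2 - 2 * (gg p)^2 / \<alpha>" using quad_bound alpos by blast
    have 5: "\<gamma> * (5*r/6 * (ln (r/10) + 1) + r^2/(12*x)) = \<gamma> * (5*r/6 * (ln (r/10) + 1)) + \<gamma> * r^2 / (12 * x)"
      by (simp add: algebra_simps)
    show "P p x y \<ge> \<gamma> * (rho p)^2 / (12 * x) + \<alpha>/8 * y^2
       - (\<gamma> * exp B - \<gamma> * (5*r/6 * (ln (r/10) + 1)) + 2 * (gg p)^2 / \<alpha> - cc * r^2 / 2)"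
      unfolding id using 1 2 3 4 5 by (simp add: r_def[symmetric])
  qed
qed

end



lemma single_le_dsum:
  fixes f :: "idx \<Rightarrow> idx \<Rightarrow> real"
  assumes "e0 \<in> set dirs" "q0 \<in> Ie N e0" "\<And>e q. f e q \<ge> 0"
  shows "f e0 q0 \<le> (\<Sum>e\<in>set dirs. \<Sum>q\<in>Ie N e. f e q)"
proof -
  have "f e0 q0 \<le> (\<Sum>q\<in>Ie N e0. f e0 q)" using assms by (intro member_le_sum) auto
  also have "\<dots> \<le> (\<Sum>e\<in>set dirs. \<Sum>q\<in>Ie N e. f e q)"
    using assms by (intro member_le_sum[of e0 "set dirs" "\<lambda>e. \<Sum>q\<in>Ie N e. f e q"]) (auto intro: sum_nonneg)
  finally show ?thesis .
qed

context grid begin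

definition Zs :: "(idx \<times> idx) set" where
  "Zs = (\<Union>e\<in>set dirs. (\<lambda>q. (q,e)) ` Ie N e) \<union> (\<lambda>p. (p,o0)) ` cells N"

lemma cells_ne: "cells N \<noteq> {}"
  using Npos unfolding cells_def by auto

lemma E1_nonneg: "E1 z \<ge> 0"
  unfolding E1_def using dtpos kap_pos by (intro sum_nonneg) (simp add: less_imp_le)

lemma E3_nonneg: "E3 z \<ge> 0"
  unfolding E3_def using mupos by (intro mult_nonneg_nonneg sum_nonneg) auto

lemma coer:
  "\<exists>R \<delta>. R \<ge> 0 \<and> \<delta> > 0 \<and> (\<forall>z. (\<forall>p\<in>cells N. xv z p > 0) \<longrightarrow> EE z \<le> EE (\<lambda>_. 0) \<longrightarrow>
      (\<forall>i\<in>Zs. \<bar>z i\<bar> \<le> R) \<and> (\<forall>p\<in>cells N. \<delta> \<le> xv z p))"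
proof -
  from P_lower have "\<forall>p\<in>cells N. \<exists>C. \<forall>x>0. \<forall>y. P p x y \<ge> \<gamma> * (rho p)^2 / (12 * x) + \<alpha>/8 * y^2 - C" by blast
  then obtain Cf where Cf: "\<And>p x y. p \<in> cells N \<Longrightarrow> x > 0 \<Longrightarrow> P p x y \<ge> \<gamma> * (rho p)^2 / (12 * x) + \<alpha>/8 * y^2 - Cf p"
    by metis
  define Cp where "Cp p = \<bar>Cf p\<bar>" for p
  define SC where "SC = (\<Sum>p\<in>cells N. Cp p)"
  have Cp0: "Cp p \<ge> 0" for p by (simp add: Cp_def)
  have SC0: "SC \<ge> 0" unfolding SC_def by (intro sum_nonneg Cp0)
  have CpSC: "Cp p \<le> SC" if "p \<in> cells N" for p
    unfolding SC_def using that Cp0 by (intro member_le_sum) auto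
  define E0 where "E0 = EE (\<lambda>_. 0)"
  define M where "M = \<bar>E0\<bar> + 2 * SC + 1"
  have M: "M > 0" unfolding M_def using SC0 by simp
  define \<delta> where "\<delta> = Min ((\<lambda>p. \<gamma> * (rho p)^2 / (12 * M)) ` cells N)"
  have \<delta>pos: "\<delta> > 0" unfolding \<delta>_def using cells_ne rho_pos gpos M by (subst Min_gr_iff) auto
  have \<delta>le: "\<delta> \<le> \<gamma> * (rho p)^2 / (12 * M)" if "p \<in> cells N" for p
    unfolding \<delta>_def using that by (intro Min_le) auto
  define R where "R = sqrt (8 * M / \<alpha>) + (\<Sum>e\<in>set dirs. \<Sum>q\<in>Ie N e. sqrt (2 * kap e q * M / dt))"
  have R0: "R \<ge> 0" unfolding R_def using M alpos dtpos kap_pos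
    by (intro add_nonneg_nonneg sum_nonneg real_sqrt_ge_zero) (auto intro!: divide_nonneg_pos mult_nonneg_nonneg less_imp_le)
  show ?thesis
  proof (intro exI conjI allI impI)
    show "R \<ge> 0" by (rule R0)
    show "\<delta> > 0" by (rule \<delta>pos)
    fix z assume pos: "\<forall>p\<in>cells N. xv z p > 0" and Ez: "EE z \<le> EE (\<lambda>_. 0)"
    have low: "P p (xv z p) (z (p,o0)) \<ge> \<gamma> * (rho p)^2 / (12 * xv z p) + \<alpha>/8 * (z (p,o0))^2 - Cp p"
      if "p \<in> cells N" for p
      using Cf[OF that, of "xv z p" "z (p,o0)"] pos that unfolding Cp_def by auto
    have low2: "P p (xv z p) (z (p,o0)) \<ge> - Cp p" if "p \<in> cells N" for p
    proof -
      have "\<gamma> * (rho p)^2 / (12 * xv z p) \<ge> 0" using gpos pos that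
        by (auto intro!: divide_nonneg_pos mult_nonneg_nonneg)
      moreover have "\<alpha>/8 * (z (p,o0))^2 \<ge> 0" using alpos by simp
      ultimately show ?thesis using low[OF that] by linarith
    qed
    have E2low: "E2 z \<ge> - SC" unfolding E2_def SC_def
      using low2 by (simp add: sum_negf[symmetric] sum_mono)
    have Pup: "P p (xv z p) (z (p,o0)) \<le> E0 + SC" if p: "p \<in> cells N" for p
    proof -
      have "E2 z = P p (xv z p) (z (p,o0)) + (\<Sum>p'\<in>cells N - {p}. P p' (xv z p') (z (p',o0)))"
        unfolding E2_def using p by (simp add: sum.remove)
      moreover have "(\<Sum>p'\<in>cells N - {p}. P p' (xv z p') (z (p',o0))) \<ge> (\<Sum>p'\<in>cells N - {p}. - Cp p')"
        using low2 by (intro sum_mono) auto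
      moreover have "(\<Sum>p'\<in>cells N - {p}. Cp p') \<le> SC"
        unfolding SC_def using Cp0 by (intro sum_mono2) auto
      moreover have "E2 z \<le> E0" using Ez E1_nonneg[of z] E3_nonneg[of z] unfolding EE_def E0_def by linarith
      ultimately show ?thesis by (simp add: sum_negf)
    qed
    have "EE z \<le> E0" using Ez by (simp add: E0_def)
    hence "E1 z + E2 z + E3 z \<le> E0" by (simp add: EE_def)
    hence E1up: "E1 z \<le> M"
      using E2low E3_nonneg[of z] SC0 abs_ge_self[of E0] unfolding M_def by linarith
    show "\<forall>p\<in>cells N. \<delta> \<le> xv z p"
    proof
      fix p assume p: "p \<in> cells N"
      have x: "xv z p > 0" using pos p by simp
      have "\<gamma> * (rho p)^2 / (12 * xv z p) \<le> M"
      proof -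
        have "\<alpha>/8 * (z (p,o0))^2 \<ge> 0" using alpos by simp
        thus ?thesis using low[OF p] Pup[OF p] CpSC[OF p] abs_ge_self[of E0] unfolding M_def by linarith
      qed
      hence "\<gamma> * (rho p)^2 \<le> M * (12 * xv z p)" using x by (simp add: divide_le_eq)
      hence "\<gamma> * (rho p)^2 / (12 * M) \<le> xv z p" using M by (simp add: divide_le_eq algebra_simps)
      thus "\<delta> \<le> xv z p" using \<delta>le[OF p] by linarith
    qed
    show "\<forall>i\<in>Zs. \<bar>z i\<bar> \<le> R"
    proof
      fix i assume "i \<in> Zs"
      then consider (f) e q where "e \<in> set dirs" "q \<in> Ie N e" "i = (q,e)" | (c) p where "p \<in> cells N" "i = (p,o0)"
        unfolding Zs_def by blast
      thus "\<bar>z i\<bar> \<le> R"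
      proof cases
        case f
        have t: "dt * (z (q,e))^2 / (2 * kap e q) \<le> E1 z" unfolding E1_def
        proof (rule single_le_dsum[where f="\<lambda>e q. dt * (z (q,e))^2 / (2 * kap e q)"])
          fix e' q' show "0 \<le> dt * (z (q',e'))^2 / (2 * kap e' q')"
            using dtpos kap_pos[of e' q'] by (intro divide_nonneg_pos mult_nonneg_nonneg) auto
        qed (use f in auto)
        have "dt * (z (q,e))^2 / (2 * kap e q) \<le> M" using t E1up by linarith
        hence "(z (q,e))^2 \<le> 2 * kap e q * M / dt" using dtpos kap_pos[of e q]
          by (simp add: divide_le_eq field_simps)
        hence "\<bar>z (q,e)\<bar> \<le> sqrt (2 * kap e q * M / dt)" by (metis real_sqrt_abs real_sqrt_le_mono)
        also have "\<dots> \<le> (\<Sum>e\<in>set dirs. \<Sum>q\<in>Ie N e. sqrt (2 * kap e q * M / dt))"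
        proof (rule single_le_dsum[where f="\<lambda>e q. sqrt (2 * kap e q * M / dt)"])
          fix e' q' show "0 \<le> sqrt (2 * kap e' q' * M / dt)"
            using dtpos kap_pos[of e' q'] M by (intro real_sqrt_ge_zero divide_nonneg_pos mult_nonneg_nonneg) auto
        qed (use f in auto)
        also have "\<dots> \<le> R" unfolding R_def using M alpos by simp
        finally show ?thesis using f by simp
      next
        case c
        have "\<alpha>/8 * (z (p,o0))^2 \<le> M"
        proof -
          have "\<gamma> * (rho p)^2 / (12 * xv z p) \<ge> 0" using gpos pos c(1)
            by (auto intro!: divide_nonneg_pos mult_nonneg_nonneg)
          thus ?thesis using low[OF c(1)] Pup[OF c(1)] CpSC[OF c(1)] abs_ge_self[of E0] unfolding M_def by linarith
        qed
        hence "(z (p,o0))^2 \<le> 8 * M / \<alpha>" using alpos by (simp add: field_simps)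
        hence "\<bar>z (p,o0)\<bar> \<le> sqrt (8 * M / \<alpha>)" by (metis real_sqrt_abs real_sqrt_le_mono)
        also have "\<dots> \<le> R" unfolding R_def using M dtpos kap_pos
          by (simp add: sum_nonneg less_imp_le)
        finally show ?thesis using c by simp
      qed
    qed
  qed
qed

end



lemma cont_coord [continuous_intros]: "continuous_on S (\<lambda>z::'a \<Rightarrow> real. z i)"
  by (rule continuous_on_subset[OF continuous_on_product_coordinates]) simp

lemma cont_msk [continuous_intros]: "continuous_on S (\<lambda>z::idx \<times> idx \<Rightarrow> real. msk N (\<lambda>q e. z (q,e)) e q)"
  by (cases "q \<in> Ie N e") (simp_all add: msk_def cont_coord)

context grid begin

lemma cont_xv [continuous_intros]: "continuous_on S (\<lambda>z. xv z p)"
  unfolding xv_def divF_def Fz_def using hpos by (intro continuous_intros) auto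

lemma cont_Gf:
  fixes f :: "'a::topological_space \<Rightarrow> real"
  assumes "continuous_on S f" "\<forall>z\<in>S. f z > 0"
  shows "continuous_on S (\<lambda>z. Gf r (f z))"
proof -
  have nz: "\<forall>z\<in>S. f z \<noteq> 0" using assms(2) by auto
  have nz2: "\<forall>z\<in>S. 6 * f z \<noteq> 0" using assms(2) by auto
  have l: "continuous_on S (\<lambda>z. ln (f z))" by (rule continuous_on_ln[OF assms(1) nz])
  have d: "continuous_on S (\<lambda>z. r^2/(6*f z))"
    by (rule continuous_on_divide) (use assms nz2 in \<open>auto intro!: continuous_intros\<close>)
  show ?thesis unfolding Gf_def
    by (intro continuous_on_add continuous_on_diff continuous_on_mult l d assms(1) continuous_on_const continuous_on_divide) (auto simp: nz)
qed

lemma cont_P: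
  assumes "continuous_on S f" "continuous_on S g" "\<forall>z\<in>S. f z > 0"
  shows "continuous_on S (\<lambda>z. P p (f z) (g z))"
  unfolding P_def
  by (intro continuous_on_add continuous_on_diff continuous_on_mult continuous_on_const cont_Gf
      continuous_on_power assms)

lemma cont_EE:
  assumes "\<forall>z\<in>S. \<forall>p\<in>cells N. xv z p > 0"
  shows "continuous_on S EE"
proof -
  have c1: "continuous_on S E1" unfolding E1_def using kap_pos
    by (intro continuous_intros) (auto simp: less_imp_neq[symmetric])
  have c3: "continuous_on S E3" unfolding E3_def using hpos by (intro continuous_intros) auto
  have c2: "continuous_on S E2" unfolding E2_def
    using assms by (intro continuous_on_sum cont_P cont_xv cont_coord) auto
  show ?thesis unfolding EE_def[abs_def] using c1 c2 c3 by (intro continuous_intros)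
qed

lemma xv_zero: "xv (\<lambda>_. 0) p = rho p"
  unfolding xv_def Fz_def by (simp add: divF_zero)

lemma exists_min:
  "\<exists>m. (\<forall>i. i \<notin> Zs \<longrightarrow> m i = 0) \<and> (\<forall>p\<in>cells N. xv m p > 0) \<and>
     (\<forall>i\<in>Zs. EE' m (dl i) = 0)"
proof -
  obtain R \<delta> where R: "R \<ge> 0" and \<delta>: "\<delta> > 0" and
    co: "\<And>z. \<forall>p\<in>cells N. xv z p > 0 \<Longrightarrow> EE z \<le> EE (\<lambda>_. 0) \<Longrightarrow>
      (\<forall>i\<in>Zs. \<bar>z i\<bar> \<le> R) \<and> (\<forall>p\<in>cells N. \<delta> \<le> xv z p)"
    using coer by blast
  define Box :: "(idx \<times> idx \<Rightarrow> real) set" where "Box = Pi UNIV (\<lambda>_. {-R..R})"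
  define Z0 :: "(idx \<times> idx \<Rightarrow> real) set" where "Z0 = (\<Inter>i\<in>-Zs. {z. z i = 0})"
  define Xd :: "(idx \<times> idx \<Rightarrow> real) set" where "Xd = (\<Inter>p\<in>cells N. {z. \<delta> \<le> xv z p})"
  define K where "K = Box \<inter> (Z0 \<inter> Xd)"
  have cB: "compact Box"
  proof -
    have "compactin (product_topology (\<lambda>_. euclidean) UNIV) (PiE UNIV (\<lambda>_::idx \<times> idx. {-R..R::real}))"
      by (simp add: compactin_PiE)
    thus ?thesis unfolding Box_def euclidean_product_topology by (simp add: PiE_UNIV_domain)
  qed
  have cZ: "closed Z0" unfolding Z0_def
    by (intro closed_INT ballI closed_Collect_eq continuous_intros)
  have cX: "closed Xd" unfolding Xd_def
    by (intro closed_INT ballI closed_Collect_le continuous_intros)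
  have cK: "compact K" unfolding K_def using cB cZ cX by blast
  have Kpos: "\<forall>z\<in>K. \<forall>p\<in>cells N. xv z p > 0"
    unfolding K_def Xd_def using \<delta> by fastforce
  have zK: "(\<lambda>_. 0) \<in> K"
  proof -
    have "\<forall>p\<in>cells N. \<delta> \<le> xv (\<lambda>_. 0) p" using co[of "\<lambda>_. 0"] rho_pos by (simp add: xv_zero)
    thus ?thesis unfolding K_def Box_def Z0_def Xd_def using R by auto
  qed
  obtain m where mK: "m \<in> K" and mmin: "\<And>z. z \<in> K \<Longrightarrow> EE m \<le> EE z"
    using continuous_attains_inf[OF cK _ cont_EE[OF Kpos]] zK by blast
  have glob: "EE m \<le> EE z" if zZ: "\<forall>i. i \<notin> Zs \<longrightarrow> z i = 0" and zp: "\<forall>p\<in>cells N. xv z p > 0" for z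
  proof (cases "EE z \<le> EE (\<lambda>_. 0)")
    case True
    from co[OF zp True] have b: "\<forall>i\<in>Zs. \<bar>z i\<bar> \<le> R" "\<forall>p\<in>cells N. \<delta> \<le> xv z p" by auto
    have "z \<in> Box" unfolding Box_def
    proof (intro Pi_I)
      fix i show "z i \<in> {-R..R}"
      proof (cases "i \<in> Zs")
        case True thus ?thesis using b(1) by (auto simp: abs_le_iff)
      next
        case False hence "z i = 0" using zZ by blast
        thus ?thesis using R by simp
      qed
    qed
    moreover have "z \<in> Z0" "z \<in> Xd" unfolding Z0_def Xd_def using zZ b(2) by auto
    ultimately show ?thesis using mmin unfolding K_def by blast
  next
    case False thus ?thesis using mmin[OF zK] by linarith
  qed
  have mZ: "\<forall>i. i \<notin> Zs \<longrightarrow> m i = 0" using mK unfolding K_def Z0_def by auto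
  have mX: "\<forall>p\<in>cells N. \<delta> \<le> xv m p" using mK unfolding K_def Xd_def by auto
  have mpos: "\<forall>p\<in>cells N. xv m p > 0" using Kpos mK by blast
  have stat: "EE' m (dl i) = 0" if i: "i \<in> Zs" for i
  proof -
    define c where "c p = dt * divF h N (Fz (dl i)) p" for p
    define bnd where "bnd = (\<Sum>p\<in>cells N. \<bar>c p\<bar>) + 1"
    have bnd: "bnd > 0" unfolding bnd_def by (simp add: add_nonneg_pos sum_nonneg)
    have cb: "\<bar>c p\<bar> \<le> bnd" if "p \<in> cells N" for p
    proof -
      have "\<bar>c p\<bar> \<le> (\<Sum>p\<in>cells N. \<bar>c p\<bar>)" using that by (intro member_le_sum) auto
      thus ?thesis unfolding bnd_def by simp
    qed
    have D: "((\<lambda>t. EE (\<lambda>j. m j + t * dl i j)) has_real_derivative EE' m (dl i)) (at 0)"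
      by (rule EE_deriv[OF mpos])
    show ?thesis
    proof (rule DERIV_local_min[OF D, of "\<delta> / bnd"])
      show "0 < \<delta> / bnd" using \<delta> bnd by simp
      show "\<forall>t. \<bar>0 - t\<bar> < \<delta> / bnd \<longrightarrow> EE (\<lambda>j. m j + 0 * dl i j) \<le> EE (\<lambda>j. m j + t * dl i j)"
      proof (intro allI impI)
        fix t :: real assume t: "\<bar>0 - t\<bar> < \<delta> / bnd"
        have "\<forall>j. j \<notin> Zs \<longrightarrow> m j + t * dl i j = 0" using mZ i by (auto simp: dl_def)
        moreover have "\<forall>p\<in>cells N. xv (\<lambda>j. m j + t * dl i j) p > 0"
        proof
          fix p assume p: "p \<in> cells N"
          have "\<bar>t * c p\<bar> \<le> \<bar>t\<bar> * bnd" using cb[OF p] by (simp add: abs_mult mult_left_mono)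
          also have "\<dots> < \<delta>" using t bnd by (simp add: pos_less_divide_eq)
          finally have "\<bar>t * c p\<bar> < \<delta>" .
          thus "xv (\<lambda>j. m j + t * dl i j) p > 0" using mX p unfolding xv_lin c_def[symmetric] by auto
        qed
        ultimately have "EE m \<le> EE (\<lambda>j. m j + t * dl i j)" by (rule glob)
        thus "EE (\<lambda>j. m j + 0 * dl i j) \<le> EE (\<lambda>j. m j + t * dl i j)" by simp
      qed
    qed
  qed
  show ?thesis using mZ mpos stat by blast
qed

end



context grid begin

lemma exists_sol:
  "\<exists>rn fn. rn \<in> gridC N \<and> fn \<in> gridC N \<and> (\<forall>p\<in>cells N. rn p > 0) \<and> EQ rn fn"
proof -
  obtain m where mZ: "\<forall>i. i \<notin> Zs \<longrightarrow> m i = 0" and mpos: "\<forall>p\<in>cells N. xv m p > 0"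
    and stat: "\<forall>i\<in>Zs. EE' m (dl i) = 0"
    using exists_min by blast
  define rn where "rn p = (if p \<in> cells N then xv m p else 0)" for p
  define fn where "fn p = (if p \<in> cells N then m (p,o0) else 0)" for p
  have Wq: "Wf rn fn p = Wm m p" if "p \<in> cells N" for p
    using that unfolding Wf_def Wm_def Px_def Sf_def cc_def rn_def fn_def by simp
  have fl: "Fz m q e = flux (Wf rn fn) q e" if e: "e \<in> set dirs" and q: "q \<in> Ie N e" for e q
  proof -
    have "(q,e) \<in> Zs" unfolding Zs_def using e q by blast
    hence "dt * m (q,e) / kap e q - dt / h * (Wm m (padd q e) - Wm m q) = 0"
      using stat grad_flux[OF e q, of m] by simp
    hence "dt * (m (q,e) / kap e q - (Wm m (padd q e) - Wm m q) / h) = 0" by (simp add: right_diff_distrib times_divide_eq_right diff_divide_distrib)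
    hence "m (q,e) / kap e q - (Wm m (padd q e) - Wm m q) / h = 0" using dtpos by simp
    hence "m (q,e) = kap e q * ((Wm m (padd q e) - Wm m q) / h)"
      using kap_pos[of e q] by (simp add: field_simps)
    moreover have "q \<in> cells N" "padd q e \<in> cells N" using q by (auto simp: Ie_def)
    ultimately show ?thesis unfolding flux_def Fz_def by (simp add: Wq)
  qed
  have EQ1: "(rn p - rho p) / dt = divF h N (flux (Wf rn fn)) p" if p: "p \<in> cells N" for p
  proof -
    have "(rn p - rho p) / dt = divF h N (Fz m) p"
      using p dtpos unfolding rn_def xv_def by simp
    also have "\<dots> = divF h N (flux (Wf rn fn)) p" by (rule divF_cong) (rule fl)
    finally show ?thesis .
  qed
  have EQ2: "\<theta> * (fn p - phi p) / dt = \<mu> / 2 * (divF h N (fluxL fn) p + lap_h h N phi p)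
        - \<alpha> / 2 * (fn p + phi p) + \<chi> / 2 * (rn p + rho p)" if p: "p \<in> cells N" for p
  proof -
    have "(p,o0) \<in> Zs" unfolding Zs_def using p by blast
    hence st: "Py p (xv m p) (m (p,o0)) - \<mu>/2 * divF h N (fluxL (yz m)) p = 0"
      using stat grad_y[OF p, of m] by simp
    have L: "divF h N (fluxL fn) p = divF h N (fluxL (yz m)) p"
      by (rule divF_cong) (auto simp: fluxL_def fn_def yz_def Ie_def)
    define t where "t = \<theta> / dt"
    have e1: "\<theta> * (fn p - phi p) / dt = t * m (p,o0) - t * phi p"
      using p unfolding t_def fn_def by (simp add: diff_divide_distrib right_diff_distrib)
    have e2: "Py p (xv m p) (m (p,o0)) = (t + \<alpha>/2) * m (p,o0) - ((t - \<alpha>/2) * phi p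
        + \<mu>/2 * lap_h h N phi p + \<chi>/2 * rho p) - \<chi>/2 * xv m p"
      unfolding Py_def aa_def gg_def t_def ..
    have "t * m (p,o0) - t * phi p = \<mu> / 2 * (divF h N (fluxL (yz m)) p + lap_h h N phi p)
        - \<alpha> / 2 * (m (p,o0) + phi p) + \<chi> / 2 * (xv m p + rho p)"
      using st unfolding e2 by (simp add: algebra_simps)
    thus ?thesis unfolding e1 L using p by (simp add: rn_def fn_def)
  qed
  show ?thesis
  proof (intro exI conjI)
    show "rn \<in> gridC N" "fn \<in> gridC N" unfolding gridC_def rn_def fn_def by auto
    show "\<forall>p\<in>cells N. 0 < rn p" using mpos unfolding rn_def by auto
    show "EQ rn fn" unfolding EQ_def using EQ1 EQ2 by blast
  qed
qed

end

theorem mainTheorem3: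
  fixes a b :: real and N :: nat
    and \<gamma> \<mu> \<alpha> \<chi> \<theta> dt :: real
    and rho_old rho phi :: "idx \<Rightarrow> real"
  assumes "a < b" and "N \<ge> 1"
    and "\<gamma> > 0" "\<mu> > 0" "\<alpha> > 0" "\<chi> > 0" "\<theta> > 0" "dt > 0"
    and "rho_old \<in> gridC N" "rho \<in> gridC N" "phi \<in> gridC N"
    and "\<forall>p \<in> cells N. rho p > 0"
  shows "\<exists>!(rho_new, phi_new).
           rho_new \<in> gridC N \<and> phi_new \<in> gridC N \<and>
           (\<forall>p \<in> cells N. rho_new p > 0) \<and>
           scheme a b N \<gamma> \<mu> \<alpha> \<chi> \<theta> dt rho_old rho phi rho_new phi_new"
proof -
  have hpos: "(b - a) / real N > 0" using assms(1,2) by simp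
  interpret g: grid N "(b - a) / real N" dt \<gamma> \<mu> \<alpha> \<chi> \<theta> rho_old rho phi
    using assms hpos by unfold_locales auto
  have iff: "scheme a b N \<gamma> \<mu> \<alpha> \<chi> \<theta> dt rho_old rho phi rn fn \<longleftrightarrow> g.EQ rn fn" for rn fn
    by (rule g.scheme_EQ) simp
  obtain rn fn where sol: "rn \<in> gridC N" "fn \<in> gridC N" "\<forall>p\<in>cells N. rn p > 0" "g.EQ rn fn"
    using g.exists_sol by blast
  show ?thesis
  proof (rule ex1I[of _ "(rn, fn)"])
    show "case (rn, fn) of (rho_new, phi_new) \<Rightarrow> rho_new \<in> gridC N \<and> phi_new \<in> gridC N \<and>
           (\<forall>p \<in> cells N. rho_new p > 0) \<and>
           scheme a b N \<gamma> \<mu> \<alpha> \<chi> \<theta> dt rho_old rho phi rho_new phi_new"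
      using sol iff by simp
  next
    fix y assume y: "case y of (rho_new, phi_new) \<Rightarrow> rho_new \<in> gridC N \<and> phi_new \<in> gridC N \<and>
           (\<forall>p \<in> cells N. rho_new p > 0) \<and>
           scheme a b N \<gamma> \<mu> \<alpha> \<chi> \<theta> dt rho_old rho phi rho_new phi_new"
    obtain r2 f2 where y2: "y = (r2, f2)" by (cases y)
    have r2: "r2 \<in> gridC N" "f2 \<in> gridC N" "\<forall>p\<in>cells N. r2 p > 0" "g.EQ r2 f2"
      using y iff unfolding y2 by auto
    have eqc: "\<forall>p\<in>cells N. r2 p = rn p \<and> f2 p = fn p"
      by (rule g.unique) (use r2 sol in auto)
    have "r2 = rn"
    proof
      fix p show "r2 p = rn p"
      proof (cases "p \<in> cells N")
        case False
        hence "r2 p = 0" "rn p = 0" using r2(1) sol(1) unfolding gridC_def by blast+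
        thus ?thesis by simp
      qed (use eqc in auto)
    qed
    moreover have "f2 = fn"
    proof
      fix p show "f2 p = fn p"
      proof (cases "p \<in> cells N")
        case False
        hence "f2 p = 0" "fn p = 0" using r2(2) sol(2) unfolding gridC_def by blast+
        thus ?thesis by simp
      qed (use eqc in auto)
    qed
    ultimately show "y = (rn, fn)" using y2 by simp
  qed
qed


end
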